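(* Let $a,b$ be distinct letters. For every $D\in\{\mathrm{AH}_{\mathrm{ned}},\mathrm{AH}_{\mathrm{ged}},\mathrm{AH}_{\mathrm{ced}}\}$ and all natural numbers $j>i$, we have $D(a^*,(a^jb)^* )<D(a^*,(a^ib)^* )$.
   Context: Words are over a finite alphabet $\Sigma\ni a,b$. An edit path from $x$ to $y$ is a sequence $p=(a_1,b_1)\cdots(a_n,b_n)$ with $(a_i,b_i)\in(\Sigma\cup\{\varepsilon\})^2\setminus\{(\varepsilon,\varepsilon)\}$, $a_1\cdots a_n=x$, $b_1\cdots b_n=y$; $|p|=n$, $\mathrm{wgt}(p)=|\{i:a_i\ne b_i\}|$. $\mathrm{ed}(x,y)=\min_p\mathrm{wgt}(p)$; $\mathrm{ned}(x,y)=\min_p\mathrm{wgt}(p)/|p|$ ($\mathrm{ned}(\varepsilon,\varepsilon)=0$); $\mathrm{ged}(x,y)=\frac{2\mathrm{ed}(x,y)}{|x|+|y|+\mathrm{ed}(x,y)}$ ($0$ if $x=y=\varepsilon$); $\mathrm{ced}(x,y)$ is the minimum, over sequences $x=u_0,\dots,u_k=y$ with $\mathrm{ed}(u_{i-1},u_i)=1$, of $\sum_{i=1}^k1/\max(|u_{i-1}|,|u_i|)$. For a word distance $d$: $\overrightarrow{\mathrm{AH}}_{d}(X,Y)=\lim_{k\to\infty}\sup_{x\in X,|x|\ge k}\inf_{y\in Y}d(x,y)$ and $\mathrm{AH}_d(X,Y)=\max\{\overrightarrow{\mathrm{AH}}_{d}(X,Y),\overrightarrow{\mathrm{AH}}_{d}(Y,X)\}$.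 *)

theory Defs
  imports "HOL-Analysis.Analysis" "HOL-Library.Extended_Real"
begin

text \<open>Words over a finite alphabet: the alphabet is the finite type 'a.
  An edit step is a pair of optional letters (None = empty word), not (None,None).\<close>

type_synonym 'a edit_path = "('a option \<times> 'a option) list"

definition opt_word :: "'a option \<Rightarrow> 'a list" where
  "opt_word u = (case u of None \<Rightarrow> [] | Some c \<Rightarrow> [c])"

definition edit_paths :: "'a list \<Rightarrow> 'a list \<Rightarrow> 'a edit_path set" where
  "edit_paths x y = {p. (\<forall>e\<in>set p. e \<noteq> (None, None))
       \<and> concat (map (\<lambda>e. opt_word (fst e)) p) = x
       \<and> concat (map (\<lambda>e. opt_word (snd e)) p) = y}"

definition wgt :: "'a edit_path \<Rightarrow> nat" where
  "wgt p = length (filter (\<lambda>e. fst e \<noteq> snd e) p)"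

definition ed :: "'a list \<Rightarrow> 'a list \<Rightarrow> nat" where
  "ed x y = (INF p\<in>edit_paths x y. wgt p)"

definition ned :: "'a list \<Rightarrow> 'a list \<Rightarrow> real" where
  "ned x y = (if x = [] \<and> y = [] then 0
              else (INF p\<in>edit_paths x y. real (wgt p) / real (length p)))"

definition ged :: "'a list \<Rightarrow> 'a list \<Rightarrow> real" where
  "ged x y = (if x = [] \<and> y = [] then 0
              else 2 * real (ed x y) / (real (length x) + real (length y) + real (ed x y)))"

definition ced_chains :: "'a list \<Rightarrow> 'a list \<Rightarrow> 'a list list set" where
  "ced_chains x y = {us. us \<noteq> [] \<and> hd us = x \<and> last us = y
       \<and> (\<forall>i. Suc i < length us \<longrightarrow> ed (us ! i) (us ! Suc i) = 1)}"

definition ced :: "'a list \<Rightarrow> 'a list \<Rightarrow> real" where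
  "ced x y = (INF us\<in>ced_chains x y.
       (\<Sum>i<length us - 1. 1 / real (max (length (us ! i)) (length (us ! Suc i)))))"

definition AH_dir :: "('a list \<Rightarrow> 'a list \<Rightarrow> real) \<Rightarrow> 'a list set \<Rightarrow> 'a list set \<Rightarrow> ereal" where
  "AH_dir d X Y = lim (\<lambda>k. SUP x\<in>{x\<in>X. length x \<ge> k}. INF y\<in>Y. ereal (d x y))"

definition AH :: "('a list \<Rightarrow> 'a list \<Rightarrow> real) \<Rightarrow> 'a list set \<Rightarrow> 'a list set \<Rightarrow> ereal" where
  "AH d X Y = max (AH_dir d X Y) (AH_dir d Y X)"

definition star_lang :: "'a list \<Rightarrow> 'a list set" where
  "star_lang w = {concat (replicate n w) | n. True}"

end

theory Submission
  imports Defs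
begin

lemma opt_word_simps[simp]: "opt_word None = []" "opt_word (Some c) = [c]"
  by (simp_all add: opt_word_def)

lemma ep_append:
  assumes "p \<in> edit_paths u v" "p' \<in> edit_paths u' v'"
  shows "p @ p' \<in> edit_paths (u @ u') (v @ v')"
  using assms by (auto simp: edit_paths_def)

lemma wgt_append[simp]: "wgt (p @ p') = wgt p + wgt p'"
  by (simp add: wgt_def)

lemma ep_map: "map (\<lambda>c. (Some (g c), Some (f c))) u \<in> edit_paths (map g u) (map f u)"
  by (induction u) (auto simp: edit_paths_def)

lemma wgt_map: "wgt (map (\<lambda>c. (Some (g c), Some (f c))) u) = length (filter (\<lambda>c. g c \<noteq> f c) u)"
  by (induction u) (auto simp: wgt_def)

lemma ep_del: "map (\<lambda>c. (Some c, None)) u \<in> edit_paths u []"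
  by (induction u) (auto simp: edit_paths_def)

lemma ep_ins: "map (\<lambda>c. (None, Some c)) u \<in> edit_paths [] u"
  by (induction u) (auto simp: edit_paths_def)

lemma wgt_del[simp]: "wgt (map (\<lambda>c. (Some c, None)) u) = length u"
  by (induction u) (auto simp: wgt_def)

lemma ep_nonempty: "edit_paths u v \<noteq> {}"
  using ep_append[OF ep_del[of u] ep_ins[of v]] by auto

lemma len_fst: "length (concat (map (\<lambda>e. opt_word (fst e)) p)) = length (filter (\<lambda>e. fst e \<noteq> None) p)"
  by (induction p) (auto simp: opt_word_def split: option.splits)
lemma len_snd: "length (concat (map (\<lambda>e. opt_word (snd e)) p)) = length (filter (\<lambda>e. snd e \<noteq> None) p)"
  by (induction p) (auto simp: opt_word_def split: option.splits)
lemma cnt_fst: "count_list (concat (map (\<lambda>e. opt_word (fst e)) p)) c = length (filter (\<lambda>e. fst e = Some c) p)"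
  by (induction p) (auto simp: opt_word_def split: option.splits)
lemma cnt_snd: "count_list (concat (map (\<lambda>e. opt_word (snd e)) p)) c = length (filter (\<lambda>e. snd e = Some c) p)"
  by (induction p) (auto simp: opt_word_def split: option.splits)

lemma length_filter_mono_set:
  "(\<And>x. x \<in> set xs \<Longrightarrow> P x \<Longrightarrow> Q x) \<Longrightarrow> length (filter P xs) \<le> length (filter Q xs)"
  by (induction xs) auto

lemma ed_le: "p \<in> edit_paths u v \<Longrightarrow> ed u v \<le> wgt p"
  unfolding ed_def by (rule cINF_lower) auto

lemma ed_attained: "\<exists>p\<in>edit_paths u v. wgt p = ed u v"
proof -
  have "Inf (wgt ` edit_paths u v) \<in> wgt ` edit_paths u v"
    by (rule Inf_nat_def1) (use ep_nonempty in auto)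
  then show ?thesis unfolding ed_def by auto
qed

lemma wgt0_eq:
  assumes "p \<in> edit_paths u v" "wgt p = 0" shows "u = v"
proof -
  have "\<forall>e\<in>set p. fst e = snd e" using assms(2) unfolding wgt_def
    by (simp add: filter_empty_conv)
  then have "map (\<lambda>e. opt_word (fst e)) p = map (\<lambda>e. opt_word (snd e)) p"
    unfolding map_eq_conv by simp
  moreover have "u = concat (map (\<lambda>e. opt_word (fst e)) p)" "v = concat (map (\<lambda>e. opt_word (snd e)) p)"
    using assms(1) by (auto simp: edit_paths_def)
  ultimately show ?thesis by metis
qed

lemma ed_one:
  assumes "u \<noteq> v" "p \<in> edit_paths u v" "wgt p \<le> 1" shows "ed u v = 1"
proof -
  obtain p0 where "p0 \<in> edit_paths u v" "wgt p0 = ed u v" using ed_attained by blast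
  then have "ed u v \<noteq> 0" using wgt0_eq assms(1) by metis
  moreover have "ed u v \<le> 1" using ed_le[OF assms(2)] assms(3) by simp
  ultimately show ?thesis by simp
qed

abbreviation idp :: "'a list \<Rightarrow> 'a edit_path" where
  "idp w \<equiv> map (\<lambda>c. (Some c, Some c)) w"

lemma idp_ep: "idp w \<in> edit_paths w w"
  using ep_map[of id id w] by simp
lemma idp_wgt[simp]: "wgt (idp w) = 0"
  using wgt_map[of id id w] by simp

lemma ed_sub: "c \<noteq> c' \<Longrightarrow> ed (w @ c # z) (w @ c' # z) = 1"
proof -
  assume c: "c \<noteq> c'"
  have "[(Some c, Some c')] \<in> edit_paths [c] [c']" by (auto simp: edit_paths_def)
  from ep_append[OF ep_append[OF idp_ep[of w] this] idp_ep[of z]]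
  have P: "idp w @ [(Some c, Some c')] @ idp z \<in> edit_paths (w @ c # z) (w @ c' # z)" by simp
  have W: "wgt (idp w @ [(Some c, Some c')] @ idp z) \<le> 1" by (simp add: wgt_def)
  show ?thesis using c by (intro ed_one[OF _ P W]) auto
qed

lemma ed_del1: "ed (w @ c # z) (w @ z) = 1"
proof -
  have "[(Some c, None)] \<in> edit_paths [c] []" by (auto simp: edit_paths_def)
  from ep_append[OF ep_append[OF idp_ep[of w] this] idp_ep[of z]]
  have P: "idp w @ [(Some c, None)] @ idp z \<in> edit_paths (w @ c # z) (w @ z)" by simp
  have W: "wgt (idp w @ [(Some c, None)] @ idp z) \<le> 1" by (simp add: wgt_def)
  have "w @ c # z \<noteq> w @ z" by (metis add_Suc_right length_Cons length_append n_not_Suc_n)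
  then show ?thesis by (intro ed_one[OF _ P W])
qed

lemma ed_ins1: "ed (w @ z) (w @ c # z) = 1"
proof -
  have "[(None, Some c)] \<in> edit_paths [] [c]" by (auto simp: edit_paths_def)
  from ep_append[OF ep_append[OF idp_ep[of w] this] idp_ep[of z]]
  have P: "idp w @ [(None, Some c)] @ idp z \<in> edit_paths (w @ z) (w @ c # z)" by simp
  have W: "wgt (idp w @ [(None, Some c)] @ idp z) \<le> 1" by (simp add: wgt_def)
  have "w @ z \<noteq> w @ c # z" by (metis add_Suc_right length_Cons length_append n_not_Suc_n)
  then show ?thesis by (intro ed_one[OF _ P W])
qed

definition csum :: "'a list list \<Rightarrow> real" where
  "csum us = (\<Sum>i<length us - 1. 1 / real (max (length (us ! i)) (length (us ! Suc i))))"

lemma ced_eq: "ced x y = (INF us\<in>ced_chains x y. csum us)"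
  unfolding ced_def csum_def by simp

lemma csum_nonneg: "csum us \<ge> 0"
  unfolding csum_def by (intro sum_nonneg) auto

lemma ced_le: "us \<in> ced_chains x y \<Longrightarrow> ced x y \<le> csum us"
  unfolding ced_eq by (rule cINF_lower) (auto intro: bdd_belowI[where m=0] csum_nonneg)

lemma csum_cons: "us \<noteq> [] \<Longrightarrow> csum (x # us) = 1 / real (max (length x) (length (hd us))) + csum us"
proof -
  assume "us \<noteq> []"
  then have l: "length (x # us) - 1 = Suc (length us - 1)" by (cases us) auto
  show ?thesis unfolding csum_def l sum.lessThan_Suc_shift
    using \<open>us \<noteq> []\<close> by (simp add: hd_conv_nth)
qed

inductive chainP :: "nat \<Rightarrow> 'a list \<Rightarrow> 'a list \<Rightarrow> nat \<Rightarrow> bool" where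
  refl: "L \<le> length x \<Longrightarrow> chainP L x x 0"
| step: "ed x y = 1 \<Longrightarrow> L \<le> length x \<Longrightarrow> chainP L y z s \<Longrightarrow> chainP L x z (Suc s)"

lemma chainP_trans: "chainP L x y s \<Longrightarrow> chainP L y z t \<Longrightarrow> chainP L x z (s + t)"
  by (induction rule: chainP.induct) (auto intro: chainP.step)

lemma chainP_len: "chainP L x y s \<Longrightarrow> L \<le> length y"
  by (induction rule: chainP.induct) auto

lemma chainP_one: "ed x y = 1 \<Longrightarrow> L \<le> length x \<Longrightarrow> L \<le> length y \<Longrightarrow> chainP L x y 1"
  using chainP.step[OF _ _ chainP.refl] by fastforce

lemma chainP_chains:
  "chainP L x y s \<Longrightarrow> \<exists>us\<in>ced_chains x y. (L > 0 \<longrightarrow> csum us \<le> real s / real L)"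
proof (induction rule: chainP.induct)
  case (refl L x)
  have "[x] \<in> ced_chains x x" by (auto simp: ced_chains_def)
  moreover have "csum [x] = 0" by (simp add: csum_def)
  ultimately show ?case by force
next
  case (step x y L z s)
  then obtain us where us: "us \<in> ced_chains y z" "L > 0 \<longrightarrow> csum us \<le> real s / real L" by blast
  have ne: "us \<noteq> []" "hd us = y" "last us = z" using us(1) by (auto simp: ced_chains_def)
  have "x # us \<in> ced_chains x z"
    unfolding ced_chains_def
  proof (intro CollectI conjI allI impI)
    fix i assume i: "Suc i < length (x # us)"
    show "ed ((x # us) ! i) ((x # us) ! Suc i) = 1"
    proof (cases i)
      case 0 then show ?thesis using ne step.hyps(1) by (simp add: hd_conv_nth)
    next
      case (Suc k) then show ?thesis using us(1) i by (auto simp: ced_chains_def)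
    qed
  qed (use ne in auto)
  moreover have "L > 0 \<longrightarrow> csum (x # us) \<le> real (Suc s) / real L"
  proof
    assume L: "L > 0"
    have "1 / real (max (length x) (length (hd us))) \<le> 1 / real L"
      using L step.hyps(2) by (intro divide_left_mono) auto
    then show "csum (x # us) \<le> real (Suc s) / real L"
      using us(2) L csum_cons[OF ne(1), of x] by (simp add: add_divide_distrib)
  qed
  ultimately show ?case by blast
qed

lemma chainP_ced: "chainP L x y s \<Longrightarrow> L > 0 \<Longrightarrow> ced x y \<le> real s / real L"
  using chainP_chains ced_le by fastforce

lemma chainP_ne: "chainP L x y s \<Longrightarrow> ced_chains x y \<noteq> {}"
  using chainP_chains by fastforce

lemma chain_ham:
  "length u = length v \<Longrightarrow> L \<le> length w + length u \<Longrightarrow>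
   chainP L (w @ u) (w @ v) (length (filter (\<lambda>(x,y). x \<noteq> y) (zip u v)))"
proof (induction u arbitrary: v w)
  case Nil then show ?case by (auto intro: chainP.refl)
next
  case (Cons c u)
  then obtain c' v' where v: "v = c' # v'" by (cases v) auto
  have ih: "chainP L ((w @ [c']) @ u) ((w @ [c']) @ v')
     (length (filter (\<lambda>(x,y). x \<noteq> y) (zip u v')))"
    using Cons v by (intro Cons.IH) auto
  show ?case
  proof (cases "c = c'")
    case True then show ?thesis using ih v by simp
  next
    case False
    have "chainP L (w @ c # u) (w @ c' # u) 1"
      using Cons.prems by (intro chainP_one ed_sub False) auto
    from chainP_trans[OF this] ih False v show ?thesis by simp
  qed
qed

lemma chain_del: "L \<le> t \<Longrightarrow> chainP L (replicate (r + t) a) (replicate t a) r"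
proof (induction r)
  case 0 then show ?case by (auto intro: chainP.refl)
next
  case (Suc r)
  have "ed ([] @ a # replicate (r + t) a) ([] @ replicate (r + t) a) = 1" by (rule ed_del1)
  then show ?case using Suc by (auto intro!: chainP.step)
qed

lemma chain_ins: "chainP 0 (replicate t a) (replicate (t + r) a) r"
proof (induction r)
  case 0 then show ?case by (auto intro: chainP.refl)
next
  case (Suc r)
  have "ed ([] @ replicate (t + r) a) ([] @ a # replicate (t + r) a) = 1" by (rule ed_ins1)
  then have "chainP 0 (replicate (t + r) a) (replicate (t + Suc r) a) 1"
    by (intro chainP_one) (auto simp: replicate_append_same[symmetric])
  from chainP_trans[OF Suc this] show ?case by simp
qed

lemma AH_dir_INF:
  "AH_dir d X Y = (INF k. SUP x\<in>{x\<in>X. length x \<ge> k}. INF y\<in>Y. ereal (d x y))"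
proof -
  let ?S = "\<lambda>k. SUP x\<in>{x\<in>X. length x \<ge> k}. INF y\<in>Y. ereal (d x y)"
  have "decseq ?S" unfolding decseq_def by (intro allI impI SUP_subset_mono) auto
  then show ?thesis unfolding AH_dir_def by (intro limI LIMSEQ_INF)
qed

lemma AH_dir_upper:
  assumes "\<And>x. x \<in> X \<Longrightarrow> length x \<ge> k \<Longrightarrow> \<exists>y\<in>Y. d x y \<le> c"
  shows "AH_dir d X Y \<le> ereal c"
proof -
  have "(SUP x\<in>{x\<in>X. length x \<ge> k}. INF y\<in>Y. ereal (d x y)) \<le> ereal c"
  proof (intro SUP_least)
    fix x assume "x \<in> {x\<in>X. length x \<ge> k}"
    then obtain y where "y \<in> Y" "d x y \<le> c" using assms by blast
    then show "(INF y\<in>Y. ereal (d x y)) \<le> ereal c"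
      by (meson INF_lower2 ereal_less_eq(3))
  qed
  then show ?thesis unfolding AH_dir_INF by (meson INF_lower2 UNIV_I)
qed

lemma AH_dir_lower:
  assumes "\<And>k. \<exists>x\<in>X. length x \<ge> k \<and> (\<forall>y\<in>Y. d x y \<ge> c)"
  shows "AH_dir d X Y \<ge> ereal c"
  unfolding AH_dir_INF
proof (intro INF_greatest)
  fix k :: nat
  obtain x where x: "x \<in> X" "length x \<ge> k" "\<forall>y\<in>Y. d x y \<ge> c" using assms by blast
  have "ereal c \<le> (INF y\<in>Y. ereal (d x y))" using x(3) by (intro INF_greatest) auto
  also have "\<dots> \<le> (SUP x\<in>{x\<in>X. length x \<ge> k}. INF y\<in>Y. ereal (d x y))"
    using x by (intro SUP_upper) auto
  finally show "ereal c \<le> \<dots>" .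
qed

lemma star_a: "star_lang [a] = {replicate n a | n. True}"
  unfolding star_lang_def by (simp add: concat_replicate_trivial)

lemma star_mem: "concat (replicate m w) \<in> star_lang w"
  unfolding star_lang_def by auto

lemma blk_len: "length (concat (replicate m (replicate j a @ [b]))) = m * (j + 1)"
  by (induction m) auto
lemma cnt_rep[simp]: "count_list (replicate j x) y = (if x = y then j else 0)"
  by (induction j) auto

lemma blk_cnt: "a \<noteq> b \<Longrightarrow> count_list (concat (replicate m (replicate j a @ [b]))) a = m * j"
  by (induction m) auto
lemma blk_cntb: "a \<noteq> b \<Longrightarrow> count_list (concat (replicate m (replicate j a @ [b]))) b = m"
  by (induction m) auto
lemma blk_nona: "a \<noteq> b \<Longrightarrow> length (filter (\<lambda>c. c \<noteq> a) (concat (replicate m (replicate j a @ [b])))) = m"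
  by (induction m) auto
lemma blk_nona': "a \<noteq> b \<Longrightarrow> length (filter (\<lambda>c. a \<noteq> c) (concat (replicate m (replicate j a @ [b])))) = m"
  by (induction m) auto

lemma ham_rep1: "length (filter (\<lambda>(x,y). x \<noteq> y) (zip (replicate (length y) a) y)) = length (filter (\<lambda>c. a \<noteq> c) y)"
  by (induction y) auto
lemma ham_rep2: "length (filter (\<lambda>(x,y). x \<noteq> y) (zip y (replicate (length y) a))) = length (filter (\<lambda>c. c \<noteq> a) y)"
  by (induction y) auto

lemma phi_arith:
  fixes A Ab du dv bu bv :: nat
  assumes "Ab \<le> A" "bu \<le> du" "bv \<le> dv" "du \<le> 1" "dv \<le> 1" "1 \<le> du + dv"
  shows "real (Ab + bu) / real (A + du) - real (Ab + bv) / real (A + dv) \<le> 1 / real (max (A + du) (A + dv))"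
proof -
  consider "du = 0" "dv = 1" | "du = 1" "dv = 0" | "du = 1" "dv = 1" using assms by linarith
  then show ?thesis
  proof cases
    case 1
    then have bu: "bu = 0" using assms by simp
    show ?thesis
    proof (cases "A = 0")
      case True then show ?thesis unfolding 1 bu True using assms by simp
    next
      case False
      have Ap: "real A > 0" using False by simp
      have AA: "real A * real A > 0" using mult_pos_pos[OF Ap Ap] .
      have nz1: "real A + real A * real A \<noteq> 0" using Ap AA by linarith
      have nz2: "real A * (real A + 1) \<noteq> 0" using nz1 by (simp add: algebra_simps)
      note nz = nz1 nz2
      have "real Ab / real A - real (Ab + bv) / real (A + 1) \<le> real Ab / real A - real Ab / real (A + 1)"
        by (intro diff_left_mono divide_right_mono) auto
      also have "\<dots> = real Ab / (real A * (real A + 1))" using False nz by (simp add: field_simps)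
      also have "\<dots> \<le> real A / (real A * (real A + 1))" using assms by (intro divide_right_mono) auto
      also have "\<dots> = 1 / real (A + 1)" using False nz by (simp add: field_simps)
      finally show ?thesis using 1 bu by simp
    qed
  next
    case 2
    then have bv: "bv = 0" using assms by simp
    show ?thesis
    proof (cases "A = 0")
      case True
      have "Ab = 0" using assms True by simp
      then show ?thesis unfolding 2 bv True using assms by simp
    next
      case False
      have Ap: "real A > 0" using False by simp
      have AA: "real A * real A > 0" using mult_pos_pos[OF Ap Ap] .
      have nz1: "real A + real A * real A \<noteq> 0" using Ap AA by linarith
      have nz2: "real A * (real A + 1) \<noteq> 0" using nz1 by (simp add: algebra_simps)
      note nz = nz1 nz2
      have "real bu \<le> 1" using assms 2 by simp
      then have "real bu * real A \<le> 1 * real A" by (intro mult_right_mono) auto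
      then have K: "real bu * real A - real Ab \<le> real A" by simp
      have "real (Ab + bu) / real (A + 1) - real Ab / real A = (real bu * real A - real Ab) / (real A * (real A + 1))"
        using False nz by (simp add: field_simps)
      also have "\<dots> \<le> real A / (real A * (real A + 1))"
        using K by (intro divide_right_mono) auto
      also have "\<dots> = 1 / real (A + 1)" using False nz by (simp add: field_simps)
      finally show ?thesis using 2 bv by simp
    qed
  next
    case 3
    have "real (Ab + bu) / real (A + 1) - real (Ab + bv) / real (A + 1) = (real bu - real bv) / real (A + 1)"
      by (simp add: diff_divide_distrib[symmetric])
    also have "\<dots> \<le> 1 / real (A + 1)" using assms 3 by (intro divide_right_mono) auto
    finally show ?thesis using 3 by simp
  qed
qed

definition phi :: "'a \<Rightarrow> 'a list \<Rightarrow> real" where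
  "phi b u = real (count_list u b) / real (length u)"

lemma len_split: "length (filter P xs) = length (filter (\<lambda>x. P x \<and> Q x) xs) + length (filter P (filter (\<lambda>x. \<not> Q x) xs))"
  by (induction xs) auto

lemma phi_step:
  assumes "ed u v = 1"
  shows "phi b u - phi b v \<le> 1 / real (max (length u) (length v))"
proof -
  obtain p where p: "p \<in> edit_paths u v" "wgt p = 1" using ed_attained[of u v] assms by auto
  let ?Q = "\<lambda>e::('a option \<times> 'a option). fst e = snd e"
  have "length (filter (\<lambda>e. \<not> ?Q e) p) = 1" using p(2) by (simp add: wgt_def)
  then obtain e where e: "filter (\<lambda>e. \<not> ?Q e) p = [e]"
    by (metis (no_types, lifting) One_nat_def length_0_conv length_Suc_conv)
  have "e \<in> set (filter (\<lambda>e. \<not> ?Q e) p)" using e by simp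
  then have eset: "e \<in> set p" "fst e \<noteq> snd e" by auto
  have nn: "e \<noteq> (None, None)" using eset p(1) by (auto simp: edit_paths_def)
  define A where "A = length (filter (\<lambda>e. fst e \<noteq> None \<and> ?Q e) p)"
  define Ab where "Ab = length (filter (\<lambda>e. fst e = Some b \<and> ?Q e) p)"
  have A': "length (filter (\<lambda>e. snd e \<noteq> None \<and> ?Q e) p) = A"
    unfolding A_def by (metis (mono_tags, lifting) filter_cong)
  have Ab': "length (filter (\<lambda>e. snd e = Some b \<and> ?Q e) p) = Ab"
    unfolding Ab_def by (metis (mono_tags, lifting) filter_cong)
  have AbA: "Ab \<le> A" unfolding A_def Ab_def by (intro length_filter_mono_set) auto
  have lu: "length u = A + (if fst e \<noteq> None then 1 else 0)"
    using p(1) len_fst[of p] len_split[of "\<lambda>e. fst e \<noteq> None" p ?Q] e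
    by (simp add: edit_paths_def A_def)
  have lv: "length v = A + (if snd e \<noteq> None then 1 else 0)"
    using p(1) len_snd[of p] len_split[of "\<lambda>e. snd e \<noteq> None" p ?Q] e A'
    by (simp add: edit_paths_def)
  have bu: "count_list u b = Ab + (if fst e = Some b then 1 else 0)"
    using p(1) cnt_fst[of p b] len_split[of "\<lambda>e. fst e = Some b" p ?Q] e
    by (simp add: edit_paths_def Ab_def)
  have bv: "count_list v b = Ab + (if snd e = Some b then 1 else 0)"
    using p(1) cnt_snd[of p b] len_split[of "\<lambda>e. snd e = Some b" p ?Q] e Ab'
    by (simp add: edit_paths_def)
  have "real (Ab + (if fst e = Some b then 1 else 0)) / real (A + (if fst e \<noteq> None then 1 else 0))
      - real (Ab + (if snd e = Some b then 1 else 0)) / real (A + (if snd e \<noteq> None then 1 else 0))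
      \<le> 1 / real (max (A + (if fst e \<noteq> None then 1 else 0)) (A + (if snd e \<noteq> None then 1 else 0)))"
    using nn AbA by (intro phi_arith) (cases e; auto)+
  then show ?thesis unfolding phi_def lu lv bu bv .
qed

lemma phi_chain:
  assumes "us \<in> ced_chains x y" shows "phi b x - phi b y \<le> csum us"
proof -
  have us: "us \<noteq> []" "hd us = x" "last us = y"
    "\<And>i. Suc i < length us \<Longrightarrow> ed (us ! i) (us ! Suc i) = 1"
    using assms by (auto simp: ced_chains_def)
  have "phi b x - phi b y = phi b (us ! 0) - phi b (us ! (length us - 1))"
    using us by (simp add: hd_conv_nth last_conv_nth)
  also have "\<dots> = (\<Sum>i<length us - 1. phi b (us ! i) - phi b (us ! Suc i))"
    by (rule sum_lessThan_telescope'[symmetric])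
  also have "\<dots> \<le> csum us" unfolding csum_def
    by (intro sum_mono phi_step us(4)) auto
  finally show ?thesis .
qed

lemma ced_lower: "ced_chains x y \<noteq> {} \<Longrightarrow> phi b x - phi b y \<le> ced x y"
  unfolding ced_eq by (intro cINF_greatest phi_chain) auto

lemma aux1: "(x::real) \<noteq> 0 \<Longrightarrow> x / (x * y) = 1 / y"
  by (cases "y = 0") (simp_all add: field_simps)
lemma aux2: "(2::real) / (2 * y) = 1 / y"
  by (cases "y = 0") (simp_all add: field_simps)

abbreviation blk :: "'a \<Rightarrow> 'a \<Rightarrow> nat \<Rightarrow> nat \<Rightarrow> 'a list" where
  "blk a b j m \<equiv> concat (replicate m (replicate j a @ [b]))"

lemma matched_le:
  assumes "p \<in> edit_paths u (replicate n a)"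
  shows "length (filter (\<lambda>e. fst e = snd e) p) \<le> count_list u a"
proof -
  have "length (filter (\<lambda>e. fst e = snd e) p) \<le> length (filter (\<lambda>e. fst e = Some a) p)"
  proof (intro length_filter_mono_set)
    fix e assume e: "e \<in> set p" "fst e = snd e"
    then have "e \<noteq> (None, None)" using assms by (auto simp: edit_paths_def)
    then obtain c where c: "snd e = Some c" using e(2) by (cases e) auto
    have "c \<in> set (concat (map (\<lambda>e. opt_word (snd e)) p))" using e(1) c by force
    moreover have "concat (map (\<lambda>e. opt_word (snd e)) p) = replicate n a"
      using assms by (simp add: edit_paths_def)
    ultimately have "c \<in> set (replicate n a)" by metis
    then have "c = a" by simp
    then show "fst e = Some a" using c e(2) by simp
  qed
  also have "\<dots> = count_list u a" using assms cnt_fst[of p a] by (simp add: edit_paths_def)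
  finally show ?thesis .
qed

lemma plen: "length p = wgt p + length (filter (\<lambda>e. fst e = snd e) p)"
  unfolding wgt_def using sum_length_filter_compl[of "\<lambda>e. fst e = snd e" p] by simp

lemma u_le: "p \<in> edit_paths u v \<Longrightarrow> length u \<le> length p"
  using len_fst[of p] length_filter_le[of _ p] by (auto simp: edit_paths_def)
lemma v_le: "p \<in> edit_paths u v \<Longrightarrow> length v \<le> length p"
  using len_snd[of p] length_filter_le[of _ p] by (auto simp: edit_paths_def)

lemma blk_basic:
  assumes "p \<in> edit_paths (blk a b i m) (replicate n a)" "a \<noteq> b"
  shows "m \<le> wgt p" "length (filter (\<lambda>e. fst e = snd e) p) \<le> m * i"
    "m * (i + 1) \<le> wgt p + length (filter (\<lambda>e. fst e = snd e) p)"
    "n \<le> wgt p + length (filter (\<lambda>e. fst e = snd e) p)"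
proof -
  show M: "length (filter (\<lambda>e. fst e = snd e) p) \<le> m * i"
    using matched_le[OF assms(1)] blk_cnt[OF assms(2)] by simp
  show L: "m * (i + 1) \<le> wgt p + length (filter (\<lambda>e. fst e = snd e) p)"
    using u_le[OF assms(1)] plen[of p] blk_len[of m i a b] by simp
  show "n \<le> wgt p + length (filter (\<lambda>e. fst e = snd e) p)"
    using v_le[OF assms(1)] plen[of p] by simp
  show "m \<le> wgt p" using M L by (simp add: algebra_simps)
qed

lemma ned_lower:
  assumes "a \<noteq> b" "m \<ge> 1"
  shows "1 / real (i + 1) \<le> ned (blk a b i m) (replicate n a)"
proof -
  have ne: "blk a b i m \<noteq> []" using blk_len[of m i a b] assms by (metis length_0_conv mult_is_0 not_one_le_zero add_eq_0_iff_both_eq_0 one_neq_zero)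
  have "1 / real (i + 1) \<le> (INF p\<in>edit_paths (blk a b i m) (replicate n a). real (wgt p) / real (length p))"
  proof (intro cINF_greatest ep_nonempty)
    fix p assume p: "p \<in> edit_paths (blk a b i m) (replicate n a)"
    define M where "M = length (filter (\<lambda>e. fst e = snd e) p)"
    note B = blk_basic[OF p assms(1), folded M_def]
    have "M \<le> wgt p * i" using B(1,2) by (meson le_trans mult_le_mono1)
    then have "wgt p + M \<le> (i + 1) * wgt p" by (simp add: algebra_simps)
    moreover have "wgt p \<ge> 1" using B(1) assms by simp
    ultimately have H: "real (wgt p + M) \<le> real (i + 1) * real (wgt p)" "real (wgt p) > 0"
      by (simp_all only: of_nat_mult[symmetric] of_nat_le_iff)
    have "1 / real (i + 1) = real (wgt p) / (real (i + 1) * real (wgt p))" using H(2) by simp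
    also have "\<dots> \<le> real (wgt p) / real (wgt p + M)"
      using H by (intro divide_left_mono) auto
    finally have "1 / real (i + 1) \<le> real (wgt p) / real (wgt p + M)" .
    then show "1 / real (i + 1) \<le> real (wgt p) / real (length p)" using plen[of p] M_def by simp
  qed
  then show ?thesis unfolding ned_def using ne by simp
qed

lemma ged_lower:
  assumes "a \<noteq> b" "m \<ge> 1"
  shows "2 / real (2 * i + 3) \<le> ged (blk a b i m) (replicate n a)"
proof -
  obtain p where p: "p \<in> edit_paths (blk a b i m) (replicate n a)" "wgt p = ed (blk a b i m) (replicate n a)"
    using ed_attained by blast
  define M where "M = length (filter (\<lambda>e. fst e = snd e) p)"
  define e where "e = wgt p"
  note B = blk_basic[OF p(1) assms(1), folded M_def e_def]
  have ne: "blk a b i m \<noteq> []" using blk_len[of m i a b] assms by (metis length_0_conv mult_is_0 not_one_le_zero add_eq_0_iff_both_eq_0 one_neq_zero)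
  have "m * (2 * i + 1) \<le> e * (2 * i + 1)" using B(1) by (rule mult_le_mono1)
  then have D: "m * (i + 1) + n + e \<le> (2 * i + 3) * e" using B by (simp add: algebra_simps)
  have e1: "e \<ge> 1" using B(1) assms by simp
  have H: "real (m * (i + 1) + n + e) \<le> real (2 * i + 3) * real e" "real e > 0"
    using D e1 by (simp_all only: of_nat_mult[symmetric] of_nat_le_iff)
  have "m * (i + 1) + n + e > 0" using e1 by simp
  then have "real (m * (i + 1) + n + e) > 0" by (simp only: of_nat_0_less_iff)
  have P: "0 < real (2 * i + 3) * real e * real (m * (i + 1) + n + e)"
    by (rule mult_pos_pos[OF mult_pos_pos[OF _ H(2)]]) (simp, fact)
  have "2 / real (2 * i + 3) = 2 * real e / (real (2 * i + 3) * real e)" using H(2) by simp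
  also have "\<dots> \<le> 2 * real e / real (m * (i + 1) + n + e)"
    by (rule divide_left_mono[OF H(1) _ P]) simp
  finally have "2 / real (2 * i + 3) \<le> 2 * real e / (real (m * (i + 1)) + real n + real e)" by simp
  then show ?thesis unfolding ged_def using ne p(2) e_def blk_len[of m i a b] by simp
qed

lemma ced_lower_blk:
  assumes "a \<noteq> b" "m \<ge> 1"
  shows "1 / real (i + 1) \<le> ced (blk a b i m) (replicate n a)"
proof -
  let ?y = "blk a b i m"
  have c1: "chainP 0 ?y (replicate (length ?y) a) (length (filter (\<lambda>c. c \<noteq> a) ?y))"
    using chain_ham[of ?y "replicate (length ?y) a" 0 "[]"] ham_rep2[of ?y a] by simp
  have c2: "\<exists>s. chainP 0 (replicate (length ?y) a) (replicate n a) s"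
  proof (cases "n \<le> length ?y")
    case True
    then show ?thesis using chain_del[of 0 n "length ?y - n" a] by auto
  next
    case False
    then show ?thesis using chain_ins[of "length ?y" a "n - length ?y"] by auto
  qed
  then obtain s where "chainP 0 (replicate (length ?y) a) (replicate n a) s" by blast
  from chainP_ne[OF chainP_trans[OF c1 this]] have "ced_chains ?y (replicate n a) \<noteq> {}" .
  from ced_lower[OF this, of b]
  have "phi b ?y - phi b (replicate n a) \<le> ced ?y (replicate n a)" .
  moreover have "phi b ?y = 1 / real (i + 1)"
  proof -
    have m: "real m > 0" using assms by simp
    have "real m / real (m * (i + 1)) = real m / (real m * real (i + 1))" by (simp only: of_nat_mult)
    also have "\<dots> = 1 / real (i + 1)" by (rule aux1) (use m in simp)
    finally show ?thesis unfolding phi_def blk_cntb[OF assms(1)] blk_len .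
  qed
  moreover have "phi b (replicate n a) = 0" unfolding phi_def using assms by simp
  ultimately show ?thesis by simp
qed

lemma lowerB:
  assumes "a \<noteq> b" "m \<ge> 1" "d \<in> {ned, ged, ced}"
  shows "2 / real (2 * i + 3) \<le> d (blk a b i m) (replicate n a)"
proof -
  have "2 / real (2 * i + 3) \<le> 2 / real (2 * i + 2)" by (intro divide_left_mono) auto
  also have "\<dots> = 2 / (2 * real (i + 1))" by simp
  also have "\<dots> = 1 / real (i + 1)" by (rule aux2)
  finally have "2 / real (2 * i + 3) \<le> 1 / real (i + 1)" .
  note N = ned_lower[OF assms(1,2), of i n] and G = ged_lower[OF assms(1,2), of i n]
    and C = ced_lower_blk[OF assms(1,2), of i n]
  consider "d = ned" | "d = ged" | "d = ced" using assms(3) by auto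
  then show ?thesis
  proof cases
    case 1 then show ?thesis using order_trans[OF \<open>2 / real (2 * i + 3) \<le> 1 / real (i + 1)\<close> N] by simp
  next
    case 2 then show ?thesis using G by simp
  next
    case 3 then show ?thesis using order_trans[OF \<open>2 / real (2 * i + 3) \<le> 1 / real (i + 1)\<close> C] by simp
  qed
qed

lemma ned_le: "p \<in> edit_paths x y \<Longrightarrow> ned x y \<le> real (wgt p) / real (length p)"
  unfolding ned_def
  by (auto intro!: cINF_lower bdd_belowI[where m=0])

lemma ged_le:
  assumes "p \<in> edit_paths x y" "length x + length y > 0"
  shows "ged x y \<le> 2 * real (wgt p) / (real (length x) + real (length y))"
proof -
  have ne: "\<not> (x = [] \<and> y = [])" using assms(2) by auto
  have pos: "real (length x) + real (length y) > 0" using assms(2) by (metis of_nat_0_less_iff of_nat_add)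
  have "2 * real (ed x y) / (real (length x) + real (length y) + real (ed x y))
      \<le> 2 * real (ed x y) / (real (length x) + real (length y))"
    using pos by (intro divide_left_mono) auto
  also have "\<dots> \<le> 2 * real (wgt p) / (real (length x) + real (length y))"
    using ed_le[OF assms(1)] pos by (intro divide_right_mono) auto
  finally show ?thesis unfolding ged_def using ne by simp
qed

lemma ep_to: "map (\<lambda>c. (Some a, Some c)) y \<in> edit_paths (replicate (length y) a) y"
  using ep_map[of "\<lambda>_. a" id y] by (simp add: map_replicate_const)
lemma ep_from: "map (\<lambda>c. (Some c, Some a)) y \<in> edit_paths y (replicate (length y) a)"
  using ep_map[of id "\<lambda>_. a" y] by (simp add: map_replicate_const)
lemma wgt_to: "wgt (map (\<lambda>c. (Some a, Some c)) y) = length (filter (\<lambda>c. a \<noteq> c) y)"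
  using wgt_map[of "\<lambda>_. a" id y] by simp
lemma wgt_from: "wgt (map (\<lambda>c. (Some c, Some a)) y) = length (filter (\<lambda>c. c \<noteq> a) y)"
  using wgt_map[of id "\<lambda>_. a" y] by simp

lemma aux3: "2 * (x::real) / (y + y) = x / y"
  by (cases "y = 0") (simp_all add: field_simps)

lemma aux4: "2 * (x::real) / (2 * y) = x / y"
  by (cases "y = 0") (simp_all add: field_simps)

lemma wgt_rep_del[simp]: "wgt (replicate r (Some a, None)) = r"
  by (induction r) (auto simp: wgt_def)

lemma upperX:
  assumes "a \<noteq> b" "d \<in> {ned, ged, ced}" "q > 0"
  shows "d (replicate (r + q * (j + 1)) a) (blk a b j q) \<le> real (q + r) / real (q * (j + 1))"
proof -
  let ?y = "blk a b j q" and ?N = "q * (j + 1)"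
  have ly: "length ?y = ?N" by (rule blk_len)
  have "?N > 0" using assms(3) by simp
  then have Npos: "real ?N > 0" by (simp only: of_nat_0_less_iff)
  define p where "p = map (\<lambda>c. (Some c, None)) (replicate r a) @ map (\<lambda>c. (Some a, Some c)) ?y"
  have p: "p \<in> edit_paths (replicate (r + ?N) a) ?y"
    using ep_append[OF ep_del[of "replicate r a"] ep_to[of a ?y]] unfolding p_def ly
    by (simp add: replicate_add)
  have wp: "wgt p = q + r" unfolding p_def using blk_nona'[OF assms(1)] by (simp add: wgt_to)
  have lp: "length p = r + ?N" unfolding p_def length_append length_map length_replicate ly ..
  consider "d = ned" | "d = ged" | "d = ced" using assms(2) by auto
  then show ?thesis
  proof cases
    case 1
    have "ned (replicate (r + ?N) a) ?y \<le> real (q + r) / real (r + ?N)"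
      using ned_le[OF p] wp lp by simp
    also have "\<dots> \<le> real (q + r) / real ?N"
      using Npos by (intro divide_left_mono) auto
    finally show ?thesis using 1 by simp
  next
    case 2
    have P2: "0 < (real (r + ?N) + real ?N) * (2 * real ?N)"
    proof (rule mult_pos_pos)
      show "0 < real (r + ?N) + real ?N" using Npos of_nat_0_le_iff[of "r + ?N"] by linarith
      show "0 < 2 * real ?N" using Npos by linarith
    qed
    have "2 * real ?N \<le> real (r + ?N) + real ?N" by simp
    from divide_left_mono[OF this _ P2]
    have M: "2 * real (q + r) / (real (r + ?N) + real ?N) \<le> 2 * real (q + r) / (2 * real ?N)" by simp
    have "ged (replicate (r + ?N) a) ?y \<le> 2 * real (q + r) / (real (r + ?N) + real ?N)"
      using ged_le[OF p] wp ly assms(3) by simp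
    also have "\<dots> \<le> 2 * real (q + r) / (2 * real ?N)" by (rule M)
    also have "\<dots> = real (q + r) / real ?N" by (rule aux4)
    finally show ?thesis using 2 by simp
  next
    case 3
    have c1: "chainP ?N (replicate (r + ?N) a) (replicate ?N a) r" by (rule chain_del) simp
    have c2: "chainP ?N (replicate (length ?y) a) ?y (length (filter (\<lambda>c. a \<noteq> c) ?y))"
      using chain_ham[of "replicate (length ?y) a" ?y ?N "[]"] ham_rep1[where a=a and y="?y"] ly by simp
    have c: "chainP ?N (replicate (r + ?N) a) ?y (r + q)"
      using chainP_trans[OF c1 c2[unfolded ly blk_nona'[OF assms(1)]]] .
    have "ced (replicate (r + ?N) a) ?y \<le> real (r + q) / real ?N"
      using chainP_ced[OF c] assms(3) by simp
    then show ?thesis using 3 by (simp add: add.commute)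
  qed
qed

lemma upperY:
  assumes "a \<noteq> b" "d \<in> {ned, ged, ced}" "m > 0"
  shows "d (blk a b j m) (replicate (m * (j + 1)) a) \<le> 1 / real (j + 1)"
proof -
  let ?y = "blk a b j m" and ?N = "m * (j + 1)"
  have ly: "length ?y = ?N" by (rule blk_len)
  have "?N > 0" using assms(3) by simp
  then have Npos: "real ?N > 0" by (simp only: of_nat_0_less_iff)
  have mpos: "real m \<noteq> 0" using assms(3) by simp
  have frac: "real m / real ?N = 1 / real (j + 1)"
    unfolding of_nat_mult by (rule aux1[OF mpos])
  define p where "p = map (\<lambda>c. (Some c, Some a)) ?y"
  have p: "p \<in> edit_paths ?y (replicate ?N a)" using ep_from[where y = ?y and a = a] unfolding p_def ly .
  have wp: "wgt p = m" unfolding p_def wgt_from using blk_nona[OF assms(1)] .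
  have lp: "length p = ?N" unfolding p_def using ly by simp
  consider "d = ned" | "d = ged" | "d = ced" using assms(2) by auto
  then show ?thesis
  proof cases
    case 1
    have "ned ?y (replicate ?N a) \<le> real m / real ?N"
      using ned_le[OF p] wp lp by simp
    then show ?thesis using 1 frac by simp
  next
    case 2
    have "ged ?y (replicate ?N a) \<le> 2 * real m / (real ?N + real ?N)"
      using ged_le[OF p] wp ly assms(3) by simp
    also have "\<dots> = real m / real ?N" by (rule aux3)
    finally show ?thesis using 2 frac by simp
  next
    case 3
    have c: "chainP ?N ?y (replicate (length ?y) a) (length (filter (\<lambda>c. c \<noteq> a) ?y))"
      using chain_ham[of ?y "replicate (length ?y) a" ?N "[]"] ham_rep2[of ?y a] ly by simp
    have "ced ?y (replicate ?N a) \<le> real m / real ?N"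
      using chainP_ced[OF c[unfolded ly blk_nona[OF assms(1)]]] assms(3) by simp
    then show ?thesis using 3 frac by simp
  qed
qed

lemma cross: "(0::real) < b \<Longrightarrow> 0 < d \<Longrightarrow> a * d \<le> c * b \<Longrightarrow> a / b \<le> c / d"
  by (simp add: divide_simps)

lemma cross_nat: "0 < b \<Longrightarrow> 0 < d \<Longrightarrow> (a::nat) * d \<le> c * b \<Longrightarrow> real a / real b \<le> real c / real d"
  by (rule cross) (simp_all, metis of_nat_le_iff of_nat_mult)

lemma cross_nat_less: "0 < b \<Longrightarrow> 0 < d \<Longrightarrow> (a::nat) * d < c * b \<Longrightarrow> real a / real b < real c / real d"
  by (simp add: divide_simps) (metis of_nat_less_iff of_nat_mult)

lemma arith1:
  assumes "Q \<le> q" "r \<le> j" "0 < Q"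
  shows "real (q + r) / real (q * (j + 1)) \<le> real (Q + j) / real (Q * (j + 1))"
proof (rule cross_nat)
  show "0 < q * (j + 1)" "0 < Q * (j + 1)" using assms by auto
  have "r * Q \<le> j * Q" using assms by simp
  also have "\<dots> \<le> j * q" using assms by simp
  finally have "(q + r) * Q \<le> (Q + j) * q" by (simp add: algebra_simps)
  then have "(q + r) * Q * (j + 1) \<le> (Q + j) * q * (j + 1)" by (rule mult_right_mono) simp
  then show "(q + r) * (Q * (j + 1)) \<le> (Q + j) * (q * (j + 1))" by (simp add: algebra_simps)
qed

lemma arith2:
  assumes "i < j" "Q = j * (2 * i + 3) + 1"
  shows "real (Q + j) / real (Q * (j + 1)) < 2 / real (2 * i + 3)"
proof -
  have "(Q + j) * (2 * i + 3) = Q * (2 * i + 3) + j * (2 * i + 3)" by (simp add: algebra_simps)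
  also have "\<dots> < Q * (2 * i + 3) + Q" using assms by simp
  also have "\<dots> = Q * (2 * i + 4)" by (simp add: algebra_simps)
  also have "\<dots> \<le> Q * (2 * j + 2)" by (rule mult_le_mono2) (use assms(1) in simp)
  also have "\<dots> = 2 * (Q * (j + 1))" by (simp add: algebra_simps)
  finally have "(Q + j) * (2 * i + 3) < 2 * (Q * (j + 1))" .
  then have "real (Q + j) / real (Q * (j + 1)) < real 2 / real (2 * i + 3)"
    using assms by (intro cross_nat_less) auto
  then show ?thesis by simp
qed

lemma arith3:
  assumes "0 < Q"
  shows "1 / real (j + 1) \<le> real (Q + j) / real (Q * (j + 1))"
  using assms by (intro cross_nat[where a=1, simplified]) (auto simp: algebra_simps)

theorem mainTheorem9:
  fixes a b :: "'a::finite" and d :: "'a list \<Rightarrow> 'a list \<Rightarrow> real" and i j :: nat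
  assumes "a \<noteq> b" and "d \<in> {ned, ged, ced}" and "i < j"
  shows "AH d (star_lang [a]) (star_lang (replicate j a @ [b]))
         < AH d (star_lang [a]) (star_lang (replicate i a @ [b]))"
proof -
  define N where "N = j + 1"
  define Q where "Q = j * (2 * i + 3) + 1"
  define c where "c = real (Q + j) / real (Q * (j + 1))"
  have Qpos: "0 < Q" unfolding Q_def by simp
  have X: "star_lang [a] = {replicate n a | n. True}" by (rule star_a)
  have Ydef: "\<And>w. star_lang w = {concat (replicate m w) | m. True}" unfolding star_lang_def by simp
  have up1: "AH_dir d (star_lang [a]) (star_lang (replicate j a @ [b])) \<le> ereal c"
  proof (rule AH_dir_upper[where k = "Q * N"])
    fix x assume x: "x \<in> star_lang [a]" "Q * N \<le> length x"
    then obtain n where n: "x = replicate n a" using X by auto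
    define q where "q = n div N"
    define r where "r = n mod N"
    have nqr: "n = r + q * (j + 1)" using div_mult_mod_eq[of n N] unfolding q_def r_def N_def by linarith
    have "Q * N div N \<le> n div N" using x n by (intro div_le_mono) simp
    moreover have "Q * N div N = Q" unfolding N_def by (rule div_mult_self_is_m) simp
    ultimately have qQ: "Q \<le> q" unfolding q_def by simp
    have rj: "r \<le> j" unfolding r_def N_def by (metis less_Suc_eq_le mod_less_divisor Suc_eq_plus1 zero_less_Suc)
    have "d x (blk a b j q) \<le> real (q + r) / real (q * (j + 1))"
      unfolding n nqr using qQ Qpos by (intro upperX assms) auto
    also have "\<dots> \<le> c" unfolding c_def using qQ rj Qpos by (rule arith1)
    finally show "\<exists>y\<in>star_lang (replicate j a @ [b]). d x y \<le> c" using star_mem by blast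
  qed
  have up2: "AH_dir d (star_lang (replicate j a @ [b])) (star_lang [a]) \<le> ereal c"
  proof (rule AH_dir_upper[where k = 1])
    fix y assume y: "y \<in> star_lang (replicate j a @ [b])" "1 \<le> length y"
    then obtain m where m: "y = blk a b j m" unfolding Ydef by auto
    have "m > 0" using y(2) m by (cases m) auto
    then have "d y (replicate (m * (j + 1)) a) \<le> 1 / real (j + 1)"
      unfolding m by (intro upperY assms)
    also have "\<dots> \<le> c" unfolding c_def using Qpos by (rule arith3)
    finally show "\<exists>x\<in>star_lang [a]. d y x \<le> c" using X by auto
  qed
  have low: "AH_dir d (star_lang (replicate i a @ [b])) (star_lang [a]) \<ge> ereal (2 / real (2 * i + 3))"
  proof (rule AH_dir_lower)
    fix k :: nat
    let ?y = "blk a b i (k + 1)"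
    have "length ?y \<ge> k" unfolding blk_len by simp
    moreover have "\<forall>x\<in>star_lang [a]. 2 / real (2 * i + 3) \<le> d ?y x"
    proof
      fix x assume "x \<in> star_lang [a]"
      then obtain n where xn: "x = replicate n a" using X by auto
      show "2 / real (2 * i + 3) \<le> d ?y x" unfolding xn
        by (rule lowerB[OF assms(1) _ assms(2)]) simp
    qed
    ultimately show "\<exists>y\<in>star_lang (replicate i a @ [b]). k \<le> length y \<and>
        (\<forall>x\<in>star_lang [a]. 2 / real (2 * i + 3) \<le> d y x)" using star_mem by blast
  qed
  have "c < 2 / real (2 * i + 3)" unfolding c_def using assms(3) Q_def by (rule arith2)
  then have lt: "ereal c < ereal (2 / real (2 * i + 3))" by simp
  have "AH d (star_lang [a]) (star_lang (replicate j a @ [b])) \<le> ereal c"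
    unfolding AH_def using up1 up2 by simp
  also note lt
  finally have "AH d (star_lang [a]) (star_lang (replicate j a @ [b])) < ereal (2 / real (2 * i + 3))" .
  also have "\<dots> \<le> AH d (star_lang [a]) (star_lang (replicate i a @ [b]))"
    unfolding AH_def using low max.coboundedI2 by blast
  finally show ?thesis .
qed

end
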